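(* Let $D$ be a distance on $\mathcal D(\mathcal H)$ that is convex in each argument and contractive. Let $\rho$ be a state and let $\sigma^*$ be a separable state with $D(\rho,\sigma^* )=E_D(\rho)$. Then for every $p\in[0,1]$, $$E_D\big((1-p)\rho+p\sigma^*\big)=(1-p)E_D(\rho).$$
   Context: $\mathcal H$ is a finite-dimensional multipartite Hilbert space, $\mathcal D(\mathcal H)$ its density matrices, $\mathcal S\subseteq\mathcal D(\mathcal H)$ the separable states (convex combinations of product states). A distance $D$ is a metric on density matrices; convex in each argument means $D(p\rho_1+(1-p)\rho_2,\sigma)\le pD(\rho_1,\sigma)+(1-p)D(\rho_2,\sigma)$; contractive means $D(\Lambda[\rho],\Lambda[\sigma])\le D(\rho,\sigma)$ for every CPT map $\Lambda$. The distance-based entanglement measure is $E_D(\rho)=\inf_{\sigma\in\mathcal S}D(\rho,\sigma)$. *)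

theory Defs
  imports Complex_Main "Jordan_Normal_Form.Matrix"
begin

definition mtrace :: "complex mat \<Rightarrow> complex" where
  "mtrace A = (\<Sum>i<dim_row A. A $$ (i, i))"

definition adjoint :: "complex mat \<Rightarrow> complex mat" where
  "adjoint A = mat (dim_col A) (dim_row A) (\<lambda>(i, j). cnj (A $$ (j, i)))"

definition psd :: "nat \<Rightarrow> complex mat \<Rightarrow> bool" where
  "psd n A \<longleftrightarrow> A \<in> carrier_mat n n \<and> adjoint A = A \<and>
     (\<forall>v \<in> carrier_vec n. 0 \<le> Re (map_vec cnj v \<bullet> (A *\<^sub>v v)))"

definition density :: "nat \<Rightarrow> complex mat set" where
  "density n = {A. psd n A \<and> mtrace A = 1}"

definition kron :: "complex mat \<Rightarrow> complex mat \<Rightarrow> complex mat" where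
  "kron A B = mat (dim_row A * dim_row B) (dim_col A * dim_col B)
     (\<lambda>(i, j). A $$ (i div dim_row B, j div dim_col B) * B $$ (i mod dim_row B, j mod dim_col B))"

text \<open>Multipartite Hilbert space H = H_1 (x) ... (x) H_k, given by the list ds of local dimensions.\<close>
definition tdim :: "nat list \<Rightarrow> nat" where
  "tdim ds = prod_list ds"

definition product_states :: "nat list \<Rightarrow> complex mat set" where
  "product_states ds = {foldr kron rs (1\<^sub>m 1) | rs.
      length rs = length ds \<and> (\<forall>i < length ds. rs ! i \<in> density (ds ! i))}"

definition separable_states :: "nat list \<Rightarrow> complex mat set" where
  "separable_states ds = {mat (tdim ds) (tdim ds) (\<lambda>(i, j). \<Sum>l<k. complex_of_real (ps l) * (ss l) $$ (i, j))
      | (k::nat) ps ss. (\<forall>l<k. 0 \<le> ps l \<and> ss l \<in> product_states ds) \<and> (\<Sum>l<k. ps l) = 1}"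

definition mix :: "real \<Rightarrow> complex mat \<Rightarrow> complex mat \<Rightarrow> complex mat" where
  "mix p A B = complex_of_real p \<cdot>\<^sub>m A + complex_of_real (1 - p) \<cdot>\<^sub>m B"

definition metric_on_density :: "nat \<Rightarrow> (complex mat \<Rightarrow> complex mat \<Rightarrow> real) \<Rightarrow> bool" where
  "metric_on_density n D \<longleftrightarrow>
     (\<forall>x \<in> density n. \<forall>y \<in> density n. (D x y = 0 \<longleftrightarrow> x = y) \<and> D x y = D y x) \<and>
     (\<forall>x \<in> density n. \<forall>y \<in> density n. \<forall>z \<in> density n. D x z \<le> D x y + D y z)"

definition convex_each_arg :: "nat \<Rightarrow> (complex mat \<Rightarrow> complex mat \<Rightarrow> real) \<Rightarrow> bool" where
  "convex_each_arg n D \<longleftrightarrow>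
     (\<forall>p \<in> {0..1}. \<forall>r1 \<in> density n. \<forall>r2 \<in> density n. \<forall>s \<in> density n.
        D (mix p r1 r2) s \<le> p * D r1 s + (1 - p) * D r2 s \<and>
        D s (mix p r1 r2) \<le> p * D s r1 + (1 - p) * D s r2)"

definition blk :: "nat \<Rightarrow> nat \<Rightarrow> nat \<Rightarrow> complex mat \<Rightarrow> complex mat" where
  "blk n a b X = mat n n (\<lambda>(i, j). X $$ (a * n + i, b * n + j))"

text \<open>(id_m (x) L) applied to an (m*n) x (m*n) matrix.\<close>
definition id_tensor :: "nat \<Rightarrow> nat \<Rightarrow> (complex mat \<Rightarrow> complex mat) \<Rightarrow> complex mat \<Rightarrow> complex mat" where
  "id_tensor m n L X = mat (m * n) (m * n) (\<lambda>(i, j). L (blk n (i div n) (j div n) X) $$ (i mod n, j mod n))"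

definition CPT_map :: "nat \<Rightarrow> (complex mat \<Rightarrow> complex mat) \<Rightarrow> bool" where
  "CPT_map n L \<longleftrightarrow>
     (\<forall>A \<in> carrier_mat n n. L A \<in> carrier_mat n n) \<and>
     (\<forall>A \<in> carrier_mat n n. \<forall>B \<in> carrier_mat n n. L (A + B) = L A + L B) \<and>
     (\<forall>c. \<forall>A \<in> carrier_mat n n. L (c \<cdot>\<^sub>m A) = c \<cdot>\<^sub>m L A) \<and>
     (\<forall>A \<in> carrier_mat n n. mtrace (L A) = mtrace A) \<and>
     (\<forall>m. \<forall>X. psd (m * n) X \<longrightarrow> psd (m * n) (id_tensor m n L X))"

definition contractive :: "nat \<Rightarrow> (complex mat \<Rightarrow> complex mat \<Rightarrow> real) \<Rightarrow> bool" where
  "contractive n D \<longleftrightarrow>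
     (\<forall>L. CPT_map n L \<longrightarrow> (\<forall>r \<in> density n. \<forall>s \<in> density n. D (L r) (L s) \<le> D r s))"

definition E_D :: "nat list \<Rightarrow> (complex mat \<Rightarrow> complex mat \<Rightarrow> real) \<Rightarrow> complex mat \<Rightarrow> real" where
  "E_D ds D r = Inf ((\<lambda>s. D r s) ` separable_states ds)"

end

theory Submission
  imports Defs
begin


definition qf :: "nat \<Rightarrow> (nat \<Rightarrow> nat \<Rightarrow> complex) \<Rightarrow> (nat \<Rightarrow> complex) \<Rightarrow> complex" where
  "qf n A v = (\<Sum>i<n. \<Sum>j<n. cnj (v i) * A i j * v j)"

definition hermf :: "nat \<Rightarrow> (nat \<Rightarrow> nat \<Rightarrow> complex) \<Rightarrow> bool" where
  "hermf n A \<longleftrightarrow> (\<forall>a<n. \<forall>b<n. cnj (A a b) = A b a)"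

definition psdf :: "nat \<Rightarrow> (nat \<Rightarrow> nat \<Rightarrow> complex) \<Rightarrow> bool" where
  "psdf n A \<longleftrightarrow> hermf n A \<and> (\<forall>v. 0 \<le> Re (qf n A v))"

lemma qf_vec:
  assumes "A \<in> carrier_mat n n" "v \<in> carrier_vec n"
  shows "map_vec cnj v \<bullet> (A *\<^sub>v v) = qf n (\<lambda>i j. A $$ (i,j)) (\<lambda>i. v $ i)"
  using assms unfolding qf_def scalar_prod_def
  by (auto simp: scalar_prod_def atLeast0LessThan sum_distrib_left mult.assoc intro!: sum.cong)

lemma adjoint_eq_iff:
  assumes "A \<in> carrier_mat n n"
  shows "adjoint A = A \<longleftrightarrow> hermf n (\<lambda>i j. A $$ (i,j))"
proof
  assume "adjoint A = A"
  then have "\<forall>i<n. \<forall>j<n. adjoint A $$ (i,j) = A $$ (i,j)" by simp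
  then show "hermf n (\<lambda>i j. A $$ (i,j))" using assms unfolding hermf_def adjoint_def
    by (metis (no_types, lifting) carrier_matD case_prod_conv complex_cnj_cnj index_mat(1))
next
  assume h: "hermf n (\<lambda>i j. A $$ (i,j))"
  show "adjoint A = A"
    by (rule eq_matI) (use assms h in \<open>auto simp: adjoint_def hermf_def\<close>)
qed

lemma psd_iff:
  "psd n A \<longleftrightarrow> A \<in> carrier_mat n n \<and> psdf n (\<lambda>i j. A $$ (i,j))"
proof
  assume p: "psd n A"
  then have c: "A \<in> carrier_mat n n" by (simp add: psd_def)
  have "0 \<le> Re (qf n (\<lambda>i j. A $$ (i,j)) v)" for v
  proof -
    have "qf n (\<lambda>i j. A $$ (i,j)) v = qf n (\<lambda>i j. A $$ (i,j)) (\<lambda>i. vec n v $ i)"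
      unfolding qf_def by (auto intro!: sum.cong)
    also have "\<dots> = map_vec cnj (vec n v) \<bullet> (A *\<^sub>v vec n v)" using qf_vec[OF c, of "vec n v"] by simp
    finally show ?thesis using p unfolding psd_def by auto
  qed
  then show "A \<in> carrier_mat n n \<and> psdf n (\<lambda>i j. A $$ (i,j))"
    using p c adjoint_eq_iff[OF c] unfolding psd_def psdf_def by auto
next
  assume a: "A \<in> carrier_mat n n \<and> psdf n (\<lambda>i j. A $$ (i,j))"
  then show "psd n A" unfolding psd_def psdf_def using qf_vec adjoint_eq_iff by auto
qed

definition bf :: "nat \<Rightarrow> (nat \<Rightarrow> nat \<Rightarrow> complex) \<Rightarrow> (nat \<Rightarrow> complex) \<Rightarrow> (nat \<Rightarrow> complex) \<Rightarrow> complex" where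
  "bf n B x y = (\<Sum>k<n. \<Sum>l<n. cnj (x k) * B k l * y l)"

lemma qf_bf: "qf n B v = bf n B v v" by (simp add: qf_def bf_def)

lemma qf_cong: "(\<And>i. i < n \<Longrightarrow> u i = v i) \<Longrightarrow> qf n A u = qf n A v"
  unfolding qf_def by (auto intro!: sum.cong)

lemma qf_Suc: "qf (Suc m) A u = qf m A u + (\<Sum>i<m. cnj (u i) * A i m) * u m
   + cnj (u m) * (\<Sum>j<m. A m j * u j) + cnj (u m) * A m m * u m"
  unfolding qf_def by (simp add: sum.distrib sum_distrib_left sum_distrib_right algebra_simps)

lemma psdf_restrict: assumes "psdf (Suc m) A" shows "psdf m A"
proof -
  have "qf m A v = qf (Suc m) A (v(m:=0))" for v
    by (simp add: qf_Suc qf_cong[of m "v(m:=0)" v])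
  then show ?thesis using assms unfolding psdf_def hermf_def by auto
qed

lemma herm_diag_real: "hermf n A \<Longrightarrow> a < n \<Longrightarrow> cnj (A a a) = A a a"
  unfolding hermf_def by auto

lemma qf_two:
  assumes "a < n" "b < n" "a \<noteq> b" "\<And>i. i \<notin> {a,b} \<Longrightarrow> v i = 0"
  shows "qf n A v = cnj (v a) * A a a * v a + cnj (v a) * A a b * v b + cnj (v b) * A b a * v a
     + cnj (v b) * A b b * v b"
proof -
  have S: "{a,b} \<subseteq> {..<n}" using assms by auto
  have "qf n A v = (\<Sum>i\<in>{a,b}. \<Sum>j<n. cnj (v i) * A i j * v j)"
    unfolding qf_def
  proof (rule sum.mono_neutral_right)
    show "\<forall>i\<in>{..<n} - {a, b}. (\<Sum>j<n. cnj (v i) * A i j * v j) = 0" using assms(4) by simp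
  qed (use S in auto)
  also have "\<dots> = (\<Sum>i\<in>{a,b}. \<Sum>j\<in>{a,b}. cnj (v i) * A i j * v j)"
    by (rule sum.cong[OF refl], rule sum.mono_neutral_right) (use S assms(4) in auto)
  finally show ?thesis using assms(3) by (simp add: algebra_simps)
qed

lemma psdf_zero_col:
  assumes p: "psdf n A" and z: "A m m = 0" and m: "m < n" and a: "a < n"
  shows "A a m = 0"
proof (rule ccontr)
  assume c0: "A a m \<noteq> 0"
  then have am: "a \<noteq> m" using z by auto
  define c where "c = A a m"
  have h: "cnj (A a m) = A m a" using p a m unfolding psdf_def hermf_def by auto
  define N where "N = c * cnj c"
  have N: "N = of_real ((cmod c)^2)" unfolding N_def using complex_norm_square by auto
  have Np: "(cmod c)^2 > 0" using c0 c_def by auto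
  define s where "s = (\<bar>Re (A a a)\<bar> + 1) / (2 * (cmod c)^2)"
  define v where "v = (\<lambda>i. if i = a then 1 else if i = m then - of_real s * cnj c else (0::complex))"
  have "qf n A v = A a a + c * (- of_real s * cnj c) + cnj (- of_real s * cnj c) * cnj c"
    using qf_two[OF a m am, of v A] z h unfolding v_def c_def by (simp add: am[symmetric])
  also have "\<dots> = A a a - 2 * of_real s * N" unfolding N_def by (simp add: algebra_simps)
  finally have "Re (qf n A v) = Re (A a a) - 2 * s * (cmod c)^2" using N by simp
  also have "\<dots> = Re (A a a) - (\<bar>Re (A a a)\<bar> + 1)" unfolding s_def using Np by (simp add: field_simps)
  also have "\<dots> < 0" by linarith
  finally show False using p unfolding psdf_def by (meson not_le)
qed

lemma psdf_schur:
  assumes p: "psdf (Suc m) A" and nz: "A m m \<noteq> 0"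
  shows "psdf m (\<lambda>a b. A a b - A a m * A m b / A m m)"
proof -
  define \<alpha> where "\<alpha> = A m m"
  have ra: "cnj \<alpha> = \<alpha>" using p unfolding psdf_def hermf_def \<alpha>_def by auto
  have h: "\<And>a b. a < Suc m \<Longrightarrow> b < Suc m \<Longrightarrow> cnj (A a b) = A b a" using p unfolding psdf_def hermf_def by auto
  have herm: "hermf m (\<lambda>a b. A a b - A a m * A m b / A m m)"
    unfolding hermf_def using h ra unfolding \<alpha>_def by auto
  have "0 \<le> Re (qf m (\<lambda>a b. A a b - A a m * A m b / A m m) v)" for v
  proof -
    define s where "s = (\<Sum>j<m. A m j * v j)"
    have hA: "\<And>i. i < m \<Longrightarrow> A i m = cnj (A m i)" using h by (metis complex_cnj_cnj less_SucI lessI)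
    have cs: "(\<Sum>i<m. cnj (v i) * A i m) = cnj s"
      unfolding s_def cnj_sum by (rule sum.cong[OF refl]) (simp add: hA)
    define u where "u = v(m := - s / \<alpha>)"
    have q1: "qf m A u = qf m A v" by (rule qf_cong) (simp add: u_def)
    have s2: "(\<Sum>j<m. A m j * u j) = s" unfolding s_def u_def by (auto intro!: sum.cong)
    have c2: "(\<Sum>i<m. cnj (u i) * A i m) = cnj s" using cs unfolding u_def by (auto intro!: sum.cong)
    have "qf (Suc m) A u = qf m A v + cnj s * (- s / \<alpha>) + cnj (- s / \<alpha>) * s + cnj (- s / \<alpha>) * \<alpha> * (- s / \<alpha>)"
      unfolding qf_Suc q1 s2 c2 by (simp add: u_def \<alpha>_def)
    also have "\<dots> = qf m A v - cnj s * s / \<alpha>"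
      using ra nz unfolding \<alpha>_def by (simp add: field_simps)
    also have "\<dots> = qf m (\<lambda>a b. A a b - A a m * A m b / A m m) v"
    proof -
      have "qf m (\<lambda>a b. A a b - A a m * A m b / A m m) v
          = qf m A v - (\<Sum>i<m. \<Sum>j<m. cnj (v i) * A i m * (A m j * v j)) / \<alpha>"
        unfolding qf_def \<alpha>_def by (simp add: sum_subtractf sum_divide_distrib algebra_simps diff_divide_distrib)
      also have "(\<Sum>i<m. \<Sum>j<m. cnj (v i) * A i m * (A m j * v j)) = cnj s * s"
      proof -
        have "(\<Sum>i<m. \<Sum>j<m. cnj (v i) * A i m * (A m j * v j)) = (\<Sum>i<m. cnj (v i) * A i m) * (\<Sum>j<m. A m j * v j)"
          by (simp only: sum_product)
        then show ?thesis using cs unfolding s_def by simp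
      qed
      finally show ?thesis by simp
    qed
    finally show ?thesis using p unfolding psdf_def by metis
  qed
  then show ?thesis using herm unfolding psdf_def by auto
qed


lemma sum4_swap: "(\<Sum>k\<in>K. \<Sum>l\<in>L. \<Sum>a\<in>A. \<Sum>b\<in>Bs. F k l a b) = (\<Sum>a\<in>A. \<Sum>b\<in>Bs. \<Sum>k\<in>K. \<Sum>l\<in>L. (F k l a b :: complex))"
proof -
  have "(\<Sum>k\<in>K. \<Sum>l\<in>L. \<Sum>a\<in>A. \<Sum>b\<in>Bs. F k l a b) = (\<Sum>k\<in>K. \<Sum>a\<in>A. \<Sum>l\<in>L. \<Sum>b\<in>Bs. F k l a b)"
    by (rule sum.cong[OF refl], rule sum.swap)
  also have "\<dots> = (\<Sum>a\<in>A. \<Sum>k\<in>K. \<Sum>l\<in>L. \<Sum>b\<in>Bs. F k l a b)" by (rule sum.swap)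
  also have "\<dots> = (\<Sum>a\<in>A. \<Sum>k\<in>K. \<Sum>b\<in>Bs. \<Sum>l\<in>L. F k l a b)"
    by (rule sum.cong[OF refl], rule sum.cong[OF refl], rule sum.swap)
  also have "\<dots> = (\<Sum>a\<in>A. \<Sum>b\<in>Bs. \<Sum>k\<in>K. \<Sum>l\<in>L. F k l a b)"
    by (rule sum.cong[OF refl], rule sum.swap)
  finally show ?thesis .
qed

lemma bf_sesq: "bf n B (\<lambda>l. \<Sum>a<M. c a * w a l) (\<lambda>l. \<Sum>b<M. d b * w b l)
   = (\<Sum>a<M. \<Sum>b<M. cnj (c a) * d b * bf n B (w a) (w b))"
proof -
  have "bf n B (\<lambda>l. \<Sum>a<M. c a * w a l) (\<lambda>l. \<Sum>b<M. d b * w b l)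
     = (\<Sum>k<n. \<Sum>l<n. \<Sum>a<M. \<Sum>b<M. cnj (c a) * d b * (cnj (w a k) * B k l * w b l))"
    unfolding bf_def cnj_sum by (simp add: sum_distrib_left sum_distrib_right mult_ac)
  also have "\<dots> = (\<Sum>a<M. \<Sum>b<M. \<Sum>k<n. \<Sum>l<n. cnj (c a) * d b * (cnj (w a k) * B k l * w b l))"
    by (rule sum4_swap)
  also have "\<dots> = (\<Sum>a<M. \<Sum>b<M. cnj (c a) * d b * bf n B (w a) (w b))"
    unfolding bf_def by (simp add: sum_distrib_left)
  finally show ?thesis .
qed

lemma core:
  assumes "psdf m A" "psdf n B"
  shows "0 \<le> Re (\<Sum>a<m. \<Sum>b<m. A a b * bf n B (w a) (w b))"
  using assms(1)
proof (induction m arbitrary: A)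
  case 0
  then show ?case by simp
next
  case (Suc m)
  have hA: "\<And>a b. a < Suc m \<Longrightarrow> b < Suc m \<Longrightarrow> cnj (A a b) = A b a" using Suc.prems unfolding psdf_def hermf_def by auto
  show ?case
  proof (cases "A m m = 0")
    case True
    have c0: "A a m = 0" if "a < Suc m" for a using psdf_zero_col[OF Suc.prems True _ that] by simp
    have r0: "A m a = 0" if "a < Suc m" for a using hA[OF that, of m] c0[OF that] by simp
    have "(\<Sum>a<Suc m. \<Sum>b<Suc m. A a b * bf n B (w a) (w b)) = (\<Sum>a<m. \<Sum>b<m. A a b * bf n B (w a) (w b))"
      using c0 r0 by simp
    then show ?thesis using Suc.IH[OF psdf_restrict[OF Suc.prems]] by simp
  next
    case False
    define \<alpha> where "\<alpha> = A m m"
    define A' where "A' = (\<lambda>a b. A a b - A a m * A m b / A m m)"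
    have ra: "cnj \<alpha> = \<alpha>" using hA \<alpha>_def by auto
    have Ap: "psdf m A'" unfolding A'_def by (rule psdf_schur[OF Suc.prems False])
    have Re\<alpha>: "0 \<le> Re \<alpha>"
    proof -
      have "qf (Suc m) A (\<lambda>i. if i = m then 1 else 0) = \<alpha>"
        unfolding qf_Suc \<alpha>_def by (simp add: qf_def)
      then show ?thesis using Suc.prems unfolding psdf_def by metis
    qed
    have \<alpha>r: "\<alpha> = of_real (Re \<alpha>)" using ra by (metis Reals_cnj_iff complex_is_Real_iff of_real_Re)
    have \<alpha>pos: "Re \<alpha> > 0" using Re\<alpha> False \<alpha>_def \<alpha>r by (metis less_eq_real_def of_real_0)
    define u where "u = (\<lambda>l. \<Sum>a<Suc m. A m a * w a l)"
    have "(\<Sum>a<Suc m. \<Sum>b<Suc m. A a b * bf n B (w a) (w b))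
      = (\<Sum>a<Suc m. \<Sum>b<Suc m. A' a b * bf n B (w a) (w b) + A a m * A m b * bf n B (w a) (w b) / \<alpha>)"
      unfolding A'_def \<alpha>_def by (intro sum.cong refl) (simp add: algebra_simps)
    also have "\<dots> = (\<Sum>a<Suc m. \<Sum>b<Suc m. A' a b * bf n B (w a) (w b))
        + (\<Sum>a<Suc m. \<Sum>b<Suc m. A a m * A m b * bf n B (w a) (w b)) / \<alpha>"
      by (simp only: sum.distrib sum_divide_distrib)
    also have "(\<Sum>a<Suc m. \<Sum>b<Suc m. A' a b * bf n B (w a) (w b)) = (\<Sum>a<m. \<Sum>b<m. A' a b * bf n B (w a) (w b))"
      using False unfolding A'_def by simp
    also have "(\<Sum>a<Suc m. \<Sum>b<Suc m. A a m * A m b * bf n B (w a) (w b)) = bf n B u u"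
      unfolding u_def bf_sesq using hA by (intro sum.cong refl) auto
    finally have eq: "(\<Sum>a<Suc m. \<Sum>b<Suc m. A a b * bf n B (w a) (w b))
       = (\<Sum>a<m. \<Sum>b<m. A' a b * bf n B (w a) (w b)) + bf n B u u / \<alpha>" .
    have "0 \<le> Re (bf n B u u)" using assms(2) unfolding psdf_def qf_bf by auto
    then have "0 \<le> Re (bf n B u u / \<alpha>)" using \<alpha>pos by (subst \<alpha>r) (simp add: Re_divide_of_real)
    then show ?thesis unfolding eq using Suc.IH[OF Ap] by simp
  qed
qed


lemma sum_pair: fixes m n :: nat shows "(\<Sum>i<m*n. f i) = (\<Sum>a<m. \<Sum>k<n. (f (a*n+k) :: 'a::comm_monoid_add))"
proof -
  have "(\<Sum>i<m*n. f i) = (\<Sum>a<m. sum f {a*n..<a*n+n})" using sum.nat_group[of f n m] by simp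
  also have "\<dots> = (\<Sum>a<m. \<Sum>k<n. f (a*n+k))"
  proof (rule sum.cong[OF refl])
    fix a
    have "sum f {0 + a*n..<n + a*n} = (\<Sum>k\<in>{0..<n}. f (k + a*n))" by (rule sum.shift_bounds_nat_ivl)
    then show "sum f {a*n..<a*n+n} = (\<Sum>k<n. f (a*n+k))" by (simp add: atLeast0LessThan add.commute)
  qed
  finally show ?thesis .
qed

lemma kron_index:
  assumes "A \<in> carrier_mat m m" "B \<in> carrier_mat n n" "a < m" "b < m" "k < n" "l < n"
  shows "kron A B $$ (a*n+k, b*n+l) = A $$ (a,b) * B $$ (k,l)"
proof -
  have "a*n+k < (a+1)*n" using assms by simp
  also have "\<dots> \<le> m*n" using assms by (intro mult_le_mono1) simp
  finally have 1: "a*n+k < m*n" .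
  have "b*n+l < (b+1)*n" using assms by simp
  also have "\<dots> \<le> m*n" using assms by (intro mult_le_mono1) simp
  finally have "b*n+l < m*n" .
  with 1 show ?thesis using assms unfolding kron_def by simp
qed

lemma decomp_idx:
  fixes i m n :: nat
  assumes "i < m*n"
  shows "\<exists>a k. i = a*n+k \<and> a < m \<and> k < n"
proof -
  have n: "n > 0" using assms by (cases n) auto
  have "i div n < m" using assms n by (simp add: div_less_iff_less_mult)
  moreover have "i mod n < n" using n by simp
  moreover have "i = (i div n)*n + i mod n" by simp
  ultimately show ?thesis by blast
qed

lemma density_parts:
  assumes "A \<in> density m"
  shows "A \<in> carrier_mat m m" "psdf m (\<lambda>i j. A $$ (i,j))" "(\<Sum>i<m. A $$ (i,i)) = 1"
  using assms unfolding density_def psd_iff mtrace_def by auto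

lemma kron_density:
  assumes dA: "A \<in> density m" and dB: "B \<in> density n"
  shows "kron A B \<in> density (m*n)"
proof -
  note cA = density_parts(1)[OF dA] and pA = density_parts(2)[OF dA] and tA = density_parts(3)[OF dA]
  note cB = density_parts(1)[OF dB] and pB = density_parts(2)[OF dB] and tB = density_parts(3)[OF dB]
  have cK: "kron A B \<in> carrier_mat (m*n) (m*n)" using cA cB unfolding kron_def by auto
  have hA: "\<And>a b. a < m \<Longrightarrow> b < m \<Longrightarrow> cnj (A $$ (a,b)) = A $$ (b,a)" using pA unfolding psdf_def hermf_def by auto
  have hB: "\<And>a b. a < n \<Longrightarrow> b < n \<Longrightarrow> cnj (B $$ (a,b)) = B $$ (b,a)" using pB unfolding psdf_def hermf_def by auto
  have herm: "hermf (m*n) (\<lambda>i j. kron A B $$ (i,j))"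
    unfolding hermf_def
  proof (intro allI impI)
    fix i j assume i: "i < m*n" and j: "j < m*n"
    obtain a k where ak: "i = a*n+k" "a < m" "k < n" using decomp_idx[OF i] by blast
    obtain b l where bl: "j = b*n+l" "b < m" "l < n" using decomp_idx[OF j] by blast
    show "cnj (kron A B $$ (i,j)) = kron A B $$ (j,i)"
      unfolding ak(1) bl(1) using kron_index[OF cA cB] ak bl hA hB by simp
  qed
  have "0 \<le> Re (qf (m*n) (\<lambda>i j. kron A B $$ (i,j)) v)" for v
  proof -
    define w where "w = (\<lambda>a k. v (a*n+k))"
    have "qf (m*n) (\<lambda>i j. kron A B $$ (i,j)) v
      = (\<Sum>a<m. \<Sum>k<n. \<Sum>b<m. \<Sum>l<n. cnj (v (a*n+k)) * kron A B $$ (a*n+k, b*n+l) * v (b*n+l))"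
      unfolding qf_def sum_pair ..
    also have "\<dots> = (\<Sum>a<m. \<Sum>k<n. \<Sum>b<m. \<Sum>l<n. A $$ (a,b) * (cnj (w a k) * B $$ (k,l) * w b l))"
      unfolding w_def by (intro sum.cong refl) (simp add: kron_index[OF cA cB] mult_ac)
    also have "\<dots> = (\<Sum>a<m. \<Sum>b<m. \<Sum>k<n. \<Sum>l<n. A $$ (a,b) * (cnj (w a k) * B $$ (k,l) * w b l))"
      by (rule sum.cong[OF refl], rule sum.swap)
    also have "\<dots> = (\<Sum>a<m. \<Sum>b<m. A $$ (a,b) * bf n (\<lambda>i j. B $$ (i,j)) (w a) (w b))"
      unfolding bf_def by (simp add: sum_distrib_left)
    finally show ?thesis using core[OF pA pB] by simp
  qed
  then have "psd (m*n) (kron A B)" unfolding psd_iff psdf_def using cK herm by auto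
  moreover have "mtrace (kron A B) = 1"
  proof -
    have "mtrace (kron A B) = (\<Sum>a<m. \<Sum>k<n. kron A B $$ (a*n+k, a*n+k))"
      unfolding mtrace_def using cK sum_pair by auto
    also have "\<dots> = (\<Sum>a<m. \<Sum>k<n. A $$ (a,a) * B $$ (k,k))"
      by (intro sum.cong refl) (simp add: kron_index[OF cA cB])
    also have "\<dots> = (\<Sum>a<m. A $$ (a,a)) * (\<Sum>k<n. B $$ (k,k))" by (simp add: sum_product)
    finally show ?thesis using tA tB by simp
  qed
  ultimately show ?thesis unfolding density_def by simp
qed



lemma one_density: "1\<^sub>m 1 \<in> density 1"
proof -
  have "0 \<le> Re (qf 1 (\<lambda>i j. (1\<^sub>m 1 :: complex mat) $$ (i,j)) v)" for v
  proof -
    have "qf 1 (\<lambda>i j. (1\<^sub>m 1 :: complex mat) $$ (i,j)) v = v 0 * cnj (v 0)" by (simp add: qf_def)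
    also have "\<dots> = of_real ((Re (v 0))\<^sup>2 + (Im (v 0))\<^sup>2)" by (rule complex_mult_cnj)
    finally show ?thesis by simp
  qed
  then show ?thesis unfolding density_def psd_iff psdf_def hermf_def mtrace_def by auto
qed

lemma foldr_kron_density:
  "length rs = length ds \<Longrightarrow> (\<forall>i < length ds. rs ! i \<in> density (ds ! i))
   \<Longrightarrow> foldr kron rs (1\<^sub>m 1) \<in> density (prod_list ds)"
proof (induction ds arbitrary: rs)
  case Nil
  then show ?case using one_density by simp
next
  case (Cons d ds)
  then obtain r rs' where rs: "rs = r # rs'" by (cases rs) auto
  have "r \<in> density d" using Cons.prems rs by force
  moreover have "foldr kron rs' (1\<^sub>m 1) \<in> density (prod_list ds)"
    using Cons.IH[of rs'] Cons.prems rs by force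
  ultimately show ?case using rs kron_density by simp
qed

lemma product_density: "s \<in> product_states ds \<Longrightarrow> s \<in> density (tdim ds)"
  unfolding product_states_def tdim_def using foldr_kron_density by blast

lemma convex_density:
  assumes cM: "M \<in> carrier_mat n n"
    and eM: "\<And>i j. i < n \<Longrightarrow> j < n \<Longrightarrow> M $$ (i,j) = (\<Sum>l<k. complex_of_real (ps l) * ss l $$ (i,j))"
    and ps: "\<And>l. l < k \<Longrightarrow> 0 \<le> ps l \<and> ss l \<in> density n"
    and s1: "(\<Sum>l<k. ps l) = 1"
  shows "M \<in> density n"
proof -
  have herm: "hermf n (\<lambda>i j. M $$ (i,j))"
    unfolding hermf_def
  proof (intro allI impI)
    fix a b assume a: "a < n" and b: "b < n"
    have "\<And>l. l < k \<Longrightarrow> cnj (ss l $$ (a,b)) = ss l $$ (b,a)"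
      using ps a b density_parts(2) unfolding psdf_def hermf_def by blast
    then show "cnj (M $$ (a,b)) = M $$ (b,a)" using a b eM cnj_sum by (simp add: cnj_sum)
  qed
  have "0 \<le> Re (qf n (\<lambda>i j. M $$ (i,j)) v)" for v
  proof -
    have "qf n (\<lambda>i j. M $$ (i,j)) v = (\<Sum>i<n. \<Sum>j<n. \<Sum>l<k. complex_of_real (ps l) * (cnj (v i) * ss l $$ (i,j) * v j))"
      unfolding qf_def by (intro sum.cong refl) (simp add: eM sum_distrib_left sum_distrib_right mult_ac)
    also have "\<dots> = (\<Sum>i<n. \<Sum>l<k. \<Sum>j<n. complex_of_real (ps l) * (cnj (v i) * ss l $$ (i,j) * v j))"
      by (rule sum.cong[OF refl], rule sum.swap)
    also have "\<dots> = (\<Sum>l<k. \<Sum>i<n. \<Sum>j<n. complex_of_real (ps l) * (cnj (v i) * ss l $$ (i,j) * v j))"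
      by (rule sum.swap)
    also have "\<dots> = (\<Sum>l<k. complex_of_real (ps l) * qf n (\<lambda>i j. ss l $$ (i,j)) v)"
      unfolding qf_def by (simp add: sum_distrib_left)
    finally have "Re (qf n (\<lambda>i j. M $$ (i,j)) v) = (\<Sum>l<k. ps l * Re (qf n (\<lambda>i j. ss l $$ (i,j)) v))"
      by simp
    also have "\<dots> \<ge> 0"
    proof (rule sum_nonneg)
      fix l assume "l \<in> {..<k}"
      then have "0 \<le> ps l" "0 \<le> Re (qf n (\<lambda>i j. ss l $$ (i,j)) v)"
        using ps density_parts(2) unfolding psdf_def by auto
      then show "0 \<le> ps l * Re (qf n (\<lambda>i j. ss l $$ (i,j)) v)" by simp
    qed
    finally show ?thesis .
  qed
  then have "psd n M" unfolding psd_iff psdf_def using cM herm by auto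
  moreover have "mtrace M = 1"
  proof -
    have "mtrace M = (\<Sum>i<n. \<Sum>l<k. complex_of_real (ps l) * ss l $$ (i,i))"
      unfolding mtrace_def using cM eM by auto
    also have "\<dots> = (\<Sum>l<k. complex_of_real (ps l) * (\<Sum>i<n. ss l $$ (i,i)))"
      by (subst sum.swap) (simp add: sum_distrib_left)
    also have "\<dots> = (\<Sum>l<k. complex_of_real (ps l))"
      using ps density_parts(3) by (intro sum.cong refl) auto
    also have "\<dots> = 1" using s1 by (metis of_real_1 of_real_sum)
    finally show ?thesis .
  qed
  ultimately show ?thesis unfolding density_def by simp
qed

lemma separable_density: "s \<in> separable_states ds \<Longrightarrow> s \<in> density (tdim ds)"
proof -
  assume "s \<in> separable_states ds"
  then obtain k :: nat and ps :: "nat \<Rightarrow> real" and ss where s: "s = mat (tdim ds) (tdim ds) (\<lambda>(i, j). \<Sum>l<k. complex_of_real (ps l) * (ss l) $$ (i, j))"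
    and h: "\<forall>l<k. 0 \<le> ps l \<and> ss l \<in> product_states ds" and s1: "(\<Sum>l<k. ps l) = 1"
    unfolding separable_states_def by blast
  show ?thesis
    by (rule convex_density[where k=k and ps=ps and ss=ss]) (use s h s1 product_density in auto)
qed

lemma mix_density:
  assumes "p \<in> {0..1}" "r1 \<in> density n" "r2 \<in> density n"
  shows "mix p r1 r2 \<in> density n"
proof -
  have c1: "r1 \<in> carrier_mat n n" and c2: "r2 \<in> carrier_mat n n" using assms density_parts by auto
  define ps where "ps = (\<lambda>l::nat. if l = 0 then p else 1 - p)"
  define ss where "ss = (\<lambda>l::nat. if l = 0 then r1 else r2)"
  show ?thesis
  proof (rule convex_density[where k=2 and ps=ps and ss=ss])
    show "mix p r1 r2 \<in> carrier_mat n n" unfolding mix_def using c1 c2 by auto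
    show "mix p r1 r2 $$ (i,j) = (\<Sum>l<2. complex_of_real (ps l) * ss l $$ (i,j))" if "i < n" "j < n" for i j
      unfolding mix_def ps_def ss_def using c1 c2 that by (simp add: numeral_2_eq_2)
    show "0 \<le> ps l \<and> ss l \<in> density n" if "l < 2" for l
      using assms unfolding ps_def ss_def by auto
    show "(\<Sum>l<2. ps l) = 1" unfolding ps_def by (simp add: numeral_2_eq_2)
  qed
qed



theorem mainTheorem8:
  fixes ds :: "nat list" and D :: "complex mat \<Rightarrow> complex mat \<Rightarrow> real"
    and \<rho> \<sigma> :: "complex mat" and p :: real
  assumes "2 \<le> length ds"
    and "metric_on_density (tdim ds) D"
    and "convex_each_arg (tdim ds) D"
    and "contractive (tdim ds) D"
    and "\<rho> \<in> density (tdim ds)"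
    and "\<sigma> \<in> separable_states ds"
    and "D \<rho> \<sigma> = E_D ds D \<rho>"
    and "p \<in> {0..1}"
  shows "E_D ds D (mix (1 - p) \<rho> \<sigma>) = (1 - p) * E_D ds D \<rho>"
proof -
  define N where "N = tdim ds"
  define S where "S = separable_states ds"
  define \<tau> where "\<tau> = mix (1 - p) \<rho> \<sigma>"
  have Sd: "\<And>s. s \<in> S \<Longrightarrow> s \<in> density N" unfolding S_def N_def using separable_density by blast
  have \<rho>d: "\<rho> \<in> density N" using assms(5) N_def by simp
  have \<sigma>S: "\<sigma> \<in> S" using assms(6) S_def by simp
  have \<sigma>d: "\<sigma> \<in> density N" using Sd \<sigma>S by blast
  have p1: "1 - p \<in> {0..1}" using assms(8) by auto
  have \<tau>d: "\<tau> \<in> density N" unfolding \<tau>_def using mix_density[OF p1 \<rho>d \<sigma>d] .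
  have met: "metric_on_density N D" using assms(2) N_def by simp
  have d0: "\<And>x. x \<in> density N \<Longrightarrow> D x x = 0" using met unfolding metric_on_density_def by blast
  have tri: "\<And>x y z. x \<in> density N \<Longrightarrow> y \<in> density N \<Longrightarrow> z \<in> density N \<Longrightarrow> D x z \<le> D x y + D y z"
    using met unfolding metric_on_density_def by blast
  have sym: "\<And>x y. x \<in> density N \<Longrightarrow> y \<in> density N \<Longrightarrow> D x y = D y x"
    using met unfolding metric_on_density_def by blast
  have nn: "\<And>x y. x \<in> density N \<Longrightarrow> y \<in> density N \<Longrightarrow> 0 \<le> D x y"
  proof -
    fix x y assume x: "x \<in> density N" and y: "y \<in> density N"
    have "D x x \<le> D x y + D y x" using tri[OF x y x] .
    then show "0 \<le> D x y" using d0[OF x] sym[OF x y] by simp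
  qed
  have bdd: "\<And>r. r \<in> density N \<Longrightarrow> bdd_below ((\<lambda>s. D r s) ` S)"
    using nn Sd by (intro bdd_belowI[of _ 0]) auto
  have E: "\<And>r. E_D ds D r = Inf ((\<lambda>s. D r s) ` S)" unfolding E_D_def S_def by simp
  have conv: "convex_each_arg N D" using assms(3) N_def by simp
  have cv1: "D \<tau> \<sigma> \<le> (1 - p) * D \<rho> \<sigma> + (1 - (1 - p)) * D \<sigma> \<sigma>"
    using conv p1 \<rho>d \<sigma>d unfolding convex_each_arg_def \<tau>_def by blast
  have cv2: "D \<rho> \<tau> \<le> (1 - p) * D \<rho> \<rho> + (1 - (1 - p)) * D \<rho> \<sigma>"
    using conv p1 \<rho>d \<sigma>d unfolding convex_each_arg_def \<tau>_def by blast
  have up: "E_D ds D \<tau> \<le> (1 - p) * E_D ds D \<rho>"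
  proof -
    have "E_D ds D \<tau> \<le> D \<tau> \<sigma>" unfolding E by (rule cInf_lower) (use \<sigma>S bdd[OF \<tau>d] in auto)
    also have "\<dots> \<le> (1 - p) * D \<rho> \<sigma>" using cv1 d0[OF \<sigma>d] by simp
    finally show ?thesis using assms(7) by simp
  qed
  have low: "(1 - p) * E_D ds D \<rho> \<le> E_D ds D \<tau>"
    unfolding E
  proof (rule cInf_greatest)
    show "(\<lambda>s. D \<tau> s) ` S \<noteq> {}" using \<sigma>S by auto
    fix x assume "x \<in> (\<lambda>s. D \<tau> s) ` S"
    then obtain s where s: "s \<in> S" and x: "x = D \<tau> s" by auto
    have sd: "s \<in> density N" using Sd s .
    have "Inf ((\<lambda>s. D \<rho> s) ` S) \<le> D \<rho> s" by (rule cInf_lower) (use s bdd[OF \<rho>d] in auto)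
    also have "\<dots> \<le> D \<rho> \<tau> + D \<tau> s" using tri[OF \<rho>d \<tau>d sd] .
    also have "D \<rho> \<tau> \<le> p * E_D ds D \<rho>" using cv2 d0[OF \<rho>d] assms(7) by simp
    finally have "E_D ds D \<rho> \<le> p * E_D ds D \<rho> + D \<tau> s" unfolding E by simp
    then show "(1 - p) * Inf ((\<lambda>s. D \<rho> s) ` S) \<le> x" unfolding x E[symmetric] by (simp add: algebra_simps)
  qed
  show ?thesis using up low unfolding \<tau>_def by simp
qed

end
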